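(* Let $\mu_0<\mu_1$, $\sigma_H>0$, $\pi,\lambda,p\in(0,1)$ fixed, and $s\in(\mu_0,\mu_1)$. Define $A(s)=1-\Phi\big((s-\mu_1)/\sigma_H\big)$, $B(s)=1-\Phi\big((s-\mu_0)/\sigma_H\big)$ (with $\Phi$ the standard normal cdf), \[ \lambda(1,\pi;s)=\frac{\lambda\,[\pi A(s)+(1-\pi)p]}{\pi\,[\lambda A(s)+(1-\lambda)B(s)]+(1-\pi)\,p},\qquad P_S(1,\pi;s)=\lambda(1,\pi;s)^2 . \] Then, holding $(s,\pi,\lambda,p,\mu_0,\mu_1)$ fixed, $\partial_{\sigma_H}\lambda(1,\pi;s)<0$ and $\partial_{\sigma_H}P_S(1,\pi;s)<0$.
   Context: Gaussian–quadratic benchmark: $s\mid(\theta,\omega)\sim\mathcal N(\mu_\omega,\sigma_\theta^2)$; $A$ and $B$ are the probabilities that the High type's signal exceeds the cutoff $s$ in states $\omega=1$ and $\omega=0$; the Low type recommends risk with signal-independent probability $p$; $\lambda(1,\pi;s)$ is the posterior that the state is good after a risky recommendation; effort with cost $c(e)=e^2/2$ is $e^*=\lambda(1,\pi;s)$; $P_S$ is the success probability. *)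

theory Defs
  imports "HOL-Probability.Probability"
begin

definition Phi :: "real \<Rightarrow> real" where
  "Phi x = cdf (density lborel std_normal_density) x"

definition A_hi :: "real \<Rightarrow> real \<Rightarrow> real \<Rightarrow> real" where
  "A_hi mu1 sH s = 1 - Phi ((s - mu1) / sH)"

definition B_hi :: "real \<Rightarrow> real \<Rightarrow> real \<Rightarrow> real" where
  "B_hi mu0 sH s = 1 - Phi ((s - mu0) / sH)"

definition post_risky :: "real \<Rightarrow> real \<Rightarrow> real \<Rightarrow> real \<Rightarrow> real \<Rightarrow> real \<Rightarrow> real \<Rightarrow> real" where
  "post_risky mu0 mu1 sH lam pr p s =
     lam * (pr * A_hi mu1 sH s + (1 - pr) * p) /
     (pr * (lam * A_hi mu1 sH s + (1 - lam) * B_hi mu0 sH s) + (1 - pr) * p)"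

definition succ_prob :: "real \<Rightarrow> real \<Rightarrow> real \<Rightarrow> real \<Rightarrow> real \<Rightarrow> real \<Rightarrow> real \<Rightarrow> real" where
  "succ_prob mu0 mu1 sH lam pr p s = (post_risky mu0 mu1 sH lam pr p s)\<^sup>2"

end

theory Submission
  imports Defs
begin

lemma Phi_diff: assumes "x < y" shows "Phi y - Phi x = (LBINT t=x..y. std_normal_density t)"
proof -
  let ?M = "density lborel std_normal_density"
  interpret prob_space ?M by (rule prob_space_normal_density) simp
  interpret real_distribution ?M by unfold_locales auto
  have "Phi y - Phi x = measure ?M {x<..y}" unfolding Phi_def using assms by (rule cdf_diff_eq)
  also have "\<dots> = integral\<^sup>L ?M (indicator {x<..y})" by simp
  also have "\<dots> = (LBINT t:{x<..y}. std_normal_density t)"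
    unfolding set_lebesgue_integral_def
    by (subst integral_density) (auto simp: mult.commute)
  also have "\<dots> = (LBINT t=x..y. std_normal_density t)"
    using assms by (simp add: interval_integral_Ioc)
  finally show ?thesis .
qed

lemma Phi_eq: "Phi u = Phi c + (LBINT t=c..u. std_normal_density t)"
proof (cases "c < u")
  case True then show ?thesis using Phi_diff[of c u] by simp
next
  case False
  show ?thesis
  proof (cases "u = c")
    case True then show ?thesis by simp
  next
    case False
    with \<open>\<not> c < u\<close> have "u < c" by simp
    then show ?thesis using Phi_diff[of u c]
      by (simp add: interval_integral_endpoints_reverse[of c u])
  qed
qed

lemma Phi_deriv: "(Phi has_real_derivative std_normal_density x) (at x)"
proof -
  define a where "a = x - 1"
  define b where "b = x + 1"
  have cont: "continuous_on {a..b} std_normal_density"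
    unfolding std_normal_density_def by (intro continuous_intros) auto
  have "((\<lambda>u. LBINT y=x..u. std_normal_density y) has_vector_derivative std_normal_density x) (at x within {a..b})"
    by (rule interval_integral_FTC2) (use cont in \<open>auto simp: a_def b_def\<close>)
  moreover have "at x within {a..b} = at x"
    by (rule at_within_Icc_at) (auto simp: a_def b_def)
  ultimately have "((\<lambda>u. LBINT y=x..u. std_normal_density y) has_real_derivative std_normal_density x) (at x)"
    by (simp add: has_real_derivative_iff_has_vector_derivative)
  then have "((\<lambda>u. Phi x + (LBINT y=x..u. std_normal_density y)) has_real_derivative 0 + std_normal_density x) (at x)"
    by (intro DERIV_add DERIV_const)
  then show ?thesis by (subst Phi_eq[of _ x, abs_def]) simp
qed

lemma Phi_le1: "Phi x \<le> 1"
proof -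
  let ?M = "density lborel std_normal_density"
  interpret prob_space ?M by (rule prob_space_normal_density) simp
  interpret real_distribution ?M by unfold_locales auto
  show ?thesis unfolding Phi_def by (rule cdf_bounded_prob)
qed

lemma snd_pos: "std_normal_density x > 0"
  unfolding std_normal_density_def by simp

lemma Phi_comp_deriv:
  assumes "x \<noteq> 0"
  shows "((\<lambda>y. 1 - Phi (c / y)) has_real_derivative std_normal_density (c/x) * c / x\<^sup>2) (at x)"
proof -
  have g: "((\<lambda>y. c / y) has_real_derivative - c / x\<^sup>2) (at x)"
    using assms by (auto intro!: derivative_eq_intros simp: power2_eq_square field_simps)
  have "((\<lambda>y. Phi (c / y)) has_real_derivative std_normal_density (c/x) * (- c / x\<^sup>2)) (at x)"
    by (rule DERIV_chain2[OF Phi_deriv g])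
  then have "((\<lambda>y. 1 - Phi (c / y)) has_real_derivative 0 - std_normal_density (c/x) * (- c / x\<^sup>2)) (at x)"
    by (intro DERIV_diff DERIV_const)
  then show ?thesis by simp
qed

theorem lemmaD5:
  fixes mu0 mu1 sH lam pr p s :: real
  assumes "mu0 < mu1" and "sH > 0"
    and "0 < pr" "pr < 1" and "0 < lam" "lam < 1" and "0 < p" "p < 1"
    and "mu0 < s" "s < mu1"
  shows "(\<exists>D. ((\<lambda>x. post_risky mu0 mu1 x lam pr p s) has_real_derivative D) (at sH) \<and> D < 0)
       \<and> (\<exists>D. ((\<lambda>x. succ_prob mu0 mu1 x lam pr p s) has_real_derivative D) (at sH) \<and> D < 0)"
proof -
  define A where "A = (\<lambda>x. 1 - Phi ((s - mu1) / x))"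
  define B where "B = (\<lambda>x. 1 - Phi ((s - mu0) / x))"
  define A' where "A' = std_normal_density ((s - mu1)/sH) * (s - mu1) / sH\<^sup>2"
  define B' where "B' = std_normal_density ((s - mu0)/sH) * (s - mu0) / sH\<^sup>2"
  have dA: "(A has_real_derivative A') (at sH)" unfolding A_def A'_def
    by (rule Phi_comp_deriv) (use assms in auto)
  have dB: "(B has_real_derivative B') (at sH)" unfolding B_def B'_def
    by (rule Phi_comp_deriv) (use assms in auto)
  have A'neg: "A' < 0" unfolding A'_def using assms snd_pos[of "(s - mu1)/sH"]
    by (simp add: divide_neg_pos mult_pos_neg)
  have B'pos: "B' > 0" unfolding B'_def using assms snd_pos[of "(s - mu0)/sH"]
    by simp
  have A0: "A sH \<ge> 0" and B0: "B sH \<ge> 0" unfolding A_def B_def using Phi_le1 by auto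
  define N where "N = (\<lambda>x. pr * A x + (1 - pr) * p)"
  define Dn where "Dn = (\<lambda>x. pr * (lam * A x + (1 - lam) * B x) + (1 - pr) * p)"
  have post: "(\<lambda>x. post_risky mu0 mu1 x lam pr p s) = (\<lambda>x. lam * N x / Dn x)"
    by (auto simp: post_risky_def N_def Dn_def A_def B_def A_hi_def B_hi_def fun_eq_iff)
  have Npos: "N sH > 0" unfolding N_def using assms A0 by (simp add: add_nonneg_pos)
  have Dn_eq: "Dn sH = lam * N sH + pr * (1 - lam) * B sH + (1 - lam) * (1 - pr) * p" unfolding Dn_def N_def by algebra
  have Dnpos: "Dn sH > 0" unfolding Dn_eq using assms Npos B0
    by (intro add_nonneg_pos add_pos_nonneg) auto
  have dN: "(N has_real_derivative pr * A') (at sH)" unfolding N_def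
    using dA by (auto intro!: derivative_eq_intros)
  have dDn: "(Dn has_real_derivative pr * (lam * A' + (1 - lam) * B')) (at sH)" unfolding Dn_def
    using dA dB by (auto intro!: derivative_eq_intros)
  define D where "D = ((lam * (pr * A')) * Dn sH - lam * N sH * (pr * (lam * A' + (1 - lam) * B'))) / (Dn sH)\<^sup>2"
  have dpost: "((\<lambda>x. lam * N x / Dn x) has_real_derivative D) (at sH)"
    proof -
    have "((\<lambda>x. lam * N x / Dn x) has_real_derivative ((lam * (pr * A')) * Dn sH - lam * N sH * (pr * (lam * A' + (1 - lam) * B'))) / (Dn sH * Dn sH)) (at sH)"
      using Dnpos by (intro DERIV_divide DERIV_cmult dN dDn) auto
    then show ?thesis unfolding D_def by (simp add: power2_eq_square)
  qed
  have num: "(lam * (pr * A')) * Dn sH - lam * N sH * (pr * (lam * A' + (1 - lam) * B'))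
      = lam * (pr * A' * (pr * (1 - lam) * B sH + (1 - lam) * (1 - pr) * p) - N sH * pr * (1 - lam) * B')"
    unfolding Dn_eq by algebra
  have K: "pr * (1 - lam) * B sH + (1 - lam) * (1 - pr) * p > 0" using assms B0
    by (intro add_nonneg_pos) auto
  have "pr * A' < 0" using A'neg assms by (simp add: mult_pos_neg)
  then have "pr * A' * (pr * (1 - lam) * B sH + (1 - lam) * (1 - pr) * p) < 0"
    using K by (simp add: mult_neg_pos)
  moreover have "N sH * pr * (1 - lam) * B' > 0" using Npos B'pos assms by simp
  ultimately have "pr * A' * (pr * (1 - lam) * B sH + (1 - lam) * (1 - pr) * p) - N sH * pr * (1 - lam) * B' < 0" by linarith
  then have "lam * (pr * A' * (pr * (1 - lam) * B sH + (1 - lam) * (1 - pr) * p) - N sH * pr * (1 - lam) * B') < 0"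
    using assms by (simp add: mult_pos_neg)
  then have Dneg: "D < 0" unfolding D_def num using Dnpos by (simp add: divide_neg_pos)
  have ppos: "lam * N sH / Dn sH > 0" using assms Npos Dnpos by simp
  have dsq: "((\<lambda>x. (lam * N x / Dn x)\<^sup>2) has_real_derivative 2 * (lam * N sH / Dn sH) * D) (at sH)"
    using DERIV_power[OF dpost, of 2] by (simp add: mult_ac)
  have succ: "(\<lambda>x. succ_prob mu0 mu1 x lam pr p s) = (\<lambda>x. (lam * N x / Dn x)\<^sup>2)"
    unfolding succ_prob_def using post by metis
  have "2 * (lam * N sH / Dn sH) * D < 0" using ppos Dneg by (metis mult_pos_neg zero_less_numeral mult_pos_pos)
  then show ?thesis unfolding post succ using dpost dsq Dneg by blast
qed

end
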